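(* Let $K$ be a finite field of order $q$ and $s$ a positive integer with $\gcd(s,q-1)=1$. For any positive integer $k$, any $b,t_1,\dots,t_k\in K^\times$ and any $a\in K$, $$Q^{(t_1,\dots,t_k)}_{a,b}=\frac{Q^{(a/b,t_1,\dots,t_k)}_{0,0}-Q^{(t_1,\dots,t_k)}_{0,0}}{q-1}.$$
   Context: Let $1/s$ denote the inverse of $s$ modulo $q-1$, so $x\mapsto x^{1/s}$ is the inverse permutation of $x\mapsto x^s$ on $K$. For $t=(t_1,\dots,t_k)\in K^k$ and $v=(v_1,\dots,v_k)\in K^k$ write $t\cdot v=t_1v_1+\cdots+t_kv_k$ and $\langle v\rangle=(v_1^s+\cdots+v_k^s)^{1/s}$. For $a,b\in K$, $Q^t_{a,b}$ denotes the number of $v\in K^k$ with $t\cdot v=a$ and $\langle v\rangle=b$. *)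

theory Defs
  imports Complex_Main "HOL-Library.Cardinality"
begin

definition dotp :: "'a::field list \<Rightarrow> 'a list \<Rightarrow> 'a" where
  "dotp t v = sum_list (map2 (*) t v)"

text \<open>The s-norm of v: (v_1^s + ... + v_k^s)^(1/s), where x \<mapsto> x^(1/s) is the
  inverse permutation of x \<mapsto> x^s on K.\<close>
definition snorm :: "nat \<Rightarrow> 'a::field list \<Rightarrow> 'a" where
  "snorm s v = inv (\<lambda>x::'a. x ^ s) (sum_list (map (\<lambda>x. x ^ s) v))"

definition Qcount :: "nat \<Rightarrow> 'a::{finite,field} list \<Rightarrow> 'a \<Rightarrow> 'a \<Rightarrow> nat" where
  "Qcount s t a b = card {v. length v = length t \<and> dotp t v = a \<and> snorm s v = b}"

end

theory Submission
  imports Defs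
begin

lemma fermat_field:
  fixes x :: "'a::{finite,field}"
  assumes "x \<noteq> 0"
  shows "x ^ (CARD('a) - 1) = 1"
proof -
  let ?U = "UNIV - {0::'a}"
  have cU: "card ?U = CARD('a) - 1" by (simp add: card_Diff_singleton)
  have bij: "bij_betw ((*) x) ?U ?U"
    unfolding bij_betw_def
  proof
    show "inj_on ((*) x) ?U" using assms by (auto simp: inj_on_def)
    show "(*) x ` ?U = ?U"
    proof
      show "(*) x ` ?U \<subseteq> ?U" using assms by auto
      show "?U \<subseteq> (*) x ` ?U"
      proof
        fix y assume "y \<in> ?U"
        then have "y = x * (y / x)" "y / x \<in> ?U" using assms by auto
        then show "y \<in> (*) x ` ?U" by blast
      qed
    qed
  qed
  have "prod (\<lambda>y. y) ?U = prod (\<lambda>y. x * y) ?U"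
    using prod.reindex_bij_betw[OF bij, of "\<lambda>y. y"] by simp
  also have "\<dots> = x ^ card ?U * prod (\<lambda>y. y) ?U"
    by (simp add: prod.distrib)
  finally have "prod (\<lambda>y. y) ?U * 1 = prod (\<lambda>y. y) ?U * x ^ card ?U"
    by (simp add: mult.commute)
  moreover have "prod (\<lambda>y. y) ?U \<noteq> 0" by simp
  ultimately show ?thesis using cU by (metis mult_left_cancel)
qed

lemma pow_bij:
  fixes s :: nat
  assumes "s > 0" and "coprime s (CARD('a) - 1)"
  shows "bij (\<lambda>x::'a::{finite,field}. x ^ s)"
proof -
  have "inj (\<lambda>x::'a. x ^ s)"
  proof (rule injI)
    fix x y :: 'a assume eq: "x ^ s = y ^ s"
    show "x = y"
    proof (cases "y = 0")
      case True
      then have "x ^ s = 0" using eq assms(1) by simp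
      then show ?thesis using True by simp
    next
      case False
      let ?z = "x / y"
      have z1: "?z ^ s = 1" using eq False by (simp add: power_divide)
      obtain m n where mn: "s * m = (CARD('a) - 1) * n + gcd s (CARD('a) - 1)"
        using bezout_nat[of s "CARD('a) - 1"] assms(1) by auto
      then have mn': "s * m = (CARD('a) - 1) * n + 1" using assms(2) by simp
      have znz: "?z \<noteq> 0" using z1 assms(1) by (metis zero_neq_one zero_power)
      have f: "?z ^ (CARD('a) - 1) = 1" by (rule fermat_field[OF znz])
      have "?z ^ ((CARD('a) - 1) * n + 1) = ?z"
        by (simp only: power_add power_mult f) simp
      then have "?z = ?z ^ ((CARD('a) - 1) * n + 1)" by simp
      also have "\<dots> = (?z ^ s) ^ m" by (simp add: power_mult[symmetric] mn')
      also have "\<dots> = 1" using z1 by simp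
      finally show ?thesis using False by simp
    qed
  qed
  then show ?thesis using finite_UNIV_inj_surj[of "\<lambda>x::'a. x ^ s"] by (simp add: bij_def)
qed

definition sp :: "nat \<Rightarrow> 'a::field list \<Rightarrow> 'a" where
  "sp s v = sum_list (map (\<lambda>x. x ^ s) v)"

lemma dotp_scale: "dotp t (map ((*) x) u) = x * dotp t u"
proof (induction t arbitrary: u)
  case Nil then show ?case by (simp add: dotp_def)
next
  case (Cons a t) then show ?case
    by (cases u) (simp_all add: dotp_def algebra_simps)
qed

lemma sp_scale: "sp s (map ((*) x) u) = x ^ s * sp s u"
  by (induction u) (simp_all add: sp_def algebra_simps power_mult_distrib)

lemma dotp_Cons: "dotp (c # t) (w # v) = c * w + dotp t v"
  by (simp add: dotp_def)

lemma sp_Cons: "sp s (w # v) = w ^ s + sp s v"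
  by (simp add: sp_def)

lemma finite_len: "finite {v :: 'a::finite list. length v = k \<and> P v}"
proof -
  have "finite {v :: 'a list. set v \<subseteq> UNIV \<and> length v = k}"
    by (rule finite_lists_length_eq) simp
  then show ?thesis by (rule rev_finite_subset) auto
qed

lemma card_scale:
  fixes x :: "'a::{finite,field}"
  assumes "x \<noteq> 0"
  shows "card {v. length v = k \<and> P v} = card {u. length u = k \<and> P (map ((*) x) u)}"
proof -
  have "bij_betw (map ((*) x)) {u. length u = k \<and> P (map ((*) x) u)} {v. length v = k \<and> P v}"
    unfolding bij_betw_def
  proof
    show "inj_on (map ((*) x)) {u. length u = k \<and> P (map ((*) x) u)}"
      using assms by (auto simp: inj_on_def inj_map_eq_map intro!: injI)
    show "map ((*) x) ` {u. length u = k \<and> P (map ((*) x) u)} = {v. length v = k \<and> P v}"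
    proof
      show "map ((*) x) ` {u. length u = k \<and> P (map ((*) x) u)} \<subseteq> {v. length v = k \<and> P v}"
        by auto
      show "{v. length v = k \<and> P v} \<subseteq> map ((*) x) ` {u. length u = k \<and> P (map ((*) x) u)}"
      proof
        fix v assume v: "v \<in> {v. length v = k \<and> P v}"
        have e: "map ((*) x) (map ((*) (inverse x)) v) = v"
        proof -
          have h: "(\<lambda>y. x * (inverse x * y)) = id" using assms
            by (auto simp add: mult.assoc[symmetric])
          show ?thesis by (simp add: comp_def h)
        qed
        show "v \<in> map ((*) x) ` {u. length u = k \<and> P (map ((*) x) u)}"
          using v e by (intro image_eqI[of _ _ "map ((*) (inverse x)) v"]) auto
      qed
    qed
  qed
  then show ?thesis by (simp add: bij_betw_same_card)
qed

lemma card_Suc_split: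
  "card {l :: 'a::finite list. length l = Suc k \<and> P l}
    = (\<Sum>w\<in>UNIV. card {v. length v = k \<and> P (w # v)})"
proof -
  have eq: "{l :: 'a list. length l = Suc k \<and> P l}
      = (\<Union>w\<in>UNIV. (Cons w) ` {v. length v = k \<and> P (w # v)})"
    by (auto simp: length_Suc_conv)
  have "card (\<Union>w\<in>UNIV. (Cons w) ` {v. length v = k \<and> P (w # v)})
      = (\<Sum>w\<in>UNIV. card ((Cons w) ` {v. length v = k \<and> P (w # v)}))"
    by (rule card_UN_disjoint) (auto simp: finite_len)
  also have "\<dots> = (\<Sum>w\<in>UNIV. card {v. length v = k \<and> P (w # v)})"
    by (intro sum.cong refl card_image) auto
  finally show ?thesis using eq by simp
qed


theorem lemma4p6:
  fixes s :: nat and t :: "'a::{finite,field} list" and a b :: 'a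
  assumes "s > 0" and "coprime s (CARD('a) - 1)"
    and "t \<noteq> []" and "\<forall>x\<in>set t. x \<noteq> 0" and "b \<noteq> 0"
  shows "real (Qcount s t a b) =
    (real (Qcount s ((a / b) # t) 0 0) - real (Qcount s t 0 0)) / (real CARD('a) - 1)"
proof -
  define k where "k = length t"
  define c where "c = a / b"
  have bij: "bij (\<lambda>x::'a. x ^ s)" by (rule pow_bij[OF assms(1,2)])
  have sn: "snorm s v = y \<longleftrightarrow> sp s v = y ^ s" for v and y :: 'a
    unfolding snorm_def sp_def using bij_inv_eq_iff[OF bij] by metis
  have m1: "(-1::'a) ^ s = -1"
  proof (cases "even s")
    case True
    then have "(-1::'a) ^ s = 1 ^ s" by simp
    moreover have "inj (\<lambda>x::'a. x ^ s)" using bij by (simp add: bij_def)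
    ultimately have "(-1::'a) = 1" by (metis injD)
    then show ?thesis using True by simp
  next
    case False then show ?thesis by simp
  qed
  define N where "N = card {u. length u = k \<and> dotp t u = c \<and> sp s u = 1}"
  have Q1: "Qcount s t a b = N"
  proof -
    have "Qcount s t a b = card {v. length v = k \<and> (dotp t v = a \<and> sp s v = b ^ s)}"
      unfolding Qcount_def k_def using sn by simp
    also have "\<dots> = card {u. length u = k \<and> (dotp t (map ((*) b) u) = a \<and> sp s (map ((*) b) u) = b ^ s)}"
      by (rule card_scale[OF assms(5)])
    also have "\<dots> = N" unfolding N_def
      using assms(5) by (intro arg_cong[where f=card] Collect_cong)
        (auto simp: dotp_scale sp_scale c_def field_simps)
    finally show ?thesis .
  qed
  have Q0: "Qcount s t 0 0 = card {v. length v = k \<and> dotp t v = 0 \<and> sp s v = 0}"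
    unfolding Qcount_def k_def using sn assms(1) by (simp add: zero_power)
  have "Qcount s (c # t) 0 0 = card {l. length l = Suc k \<and> (dotp (c # t) l = 0 \<and> sp s l = 0)}"
    unfolding Qcount_def k_def using sn assms(1) by (simp add: zero_power)
  also have "\<dots> = (\<Sum>w\<in>UNIV. card {v. length v = k \<and> (c * w + dotp t v = 0 \<and> w ^ s + sp s v = 0)})"
    by (simp add: card_Suc_split dotp_Cons sp_Cons)
  also have "\<dots> = card {v. length v = k \<and> (c * 0 + dotp t v = 0 \<and> 0 ^ s + sp s v = 0)}
      + (\<Sum>w\<in>UNIV - {0}. card {v. length v = k \<and> (c * w + dotp t v = 0 \<and> w ^ s + sp s v = 0)})"
    by (simp add: sum.remove[of UNIV 0])
  also have "card {v. length v = k \<and> (c * 0 + dotp t v = 0 \<and> 0 ^ s + sp s v = 0)} = Qcount s t 0 0"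
    using Q0 assms(1) by (simp add: zero_power)
  also have "(\<Sum>w\<in>UNIV - {0}. card {v. length v = k \<and> (c * w + dotp t v = 0 \<and> w ^ s + sp s v = 0)})
      = (\<Sum>w\<in>UNIV - {0::'a}. N)"
  proof (rule sum.cong[OF refl])
    fix w :: 'a assume "w \<in> UNIV - {0}"
    then have w: "w \<noteq> 0" by simp
    then have mw: "- w \<noteq> 0" by simp
    have pw: "(- w) ^ s = - (w ^ s)"
      using m1 by (metis mult_minus1 power_mult_distrib mult_minus_left mult_1)
    have ws: "w ^ s \<noteq> 0" using w by simp
    have "card {v. length v = k \<and> (c * w + dotp t v = 0 \<and> w ^ s + sp s v = 0)}
        = card {u. length u = k \<and> (c * w + dotp t (map ((*) (- w)) u) = 0 \<and> w ^ s + sp s (map ((*) (- w)) u) = 0)}"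
      by (rule card_scale[OF mw])
    also have "\<dots> = N" unfolding N_def
    proof (intro arg_cong[where f=card] Collect_cong arg_cong[where f="\<lambda>P. length _ = k \<and> P"])
      fix u
      have h1: "c * w + dotp t (map ((*) (- w)) u) = w * (c - dotp t u)"
        by (simp add: dotp_scale algebra_simps)
      have h2: "w ^ s + sp s (map ((*) (- w)) u) = w ^ s * (1 - sp s u)"
        by (simp add: sp_scale pw algebra_simps)
      show "(c * w + dotp t (map ((*) (- w)) u) = 0 \<and> w ^ s + sp s (map ((*) (- w)) u) = 0)
          = (dotp t u = c \<and> sp s u = 1)"
        unfolding h1 h2
        using w ws by auto
    qed
    finally show "card {v. length v = k \<and> (c * w + dotp t v = 0 \<and> w ^ s + sp s v = 0)} = N" .
  qed
  also have "(\<Sum>w\<in>UNIV - {0::'a}. N) = (CARD('a) - 1) * N"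
    by (simp add: card_Diff_singleton)
  finally have QC: "Qcount s (c # t) 0 0 = Qcount s t 0 0 + (CARD('a) - 1) * N" .
  have cg: "CARD('a) \<ge> 2"
  proof -
    have "card {0::'a, 1} \<le> CARD('a)" by (rule card_mono) auto
    then show ?thesis by simp
  qed
  then have "real (CARD('a) - 1) = real CARD('a) - 1" by simp
  then show ?thesis using QC Q1 cg unfolding c_def[symmetric]
    by (simp add: of_nat_diff field_simps)
qed

end
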